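(* Let $G$ be a group, $g\in[G,G]$, let $m\ge 1$, let $g_1,\dots,g_m$ be conjugates of $g$ in $G$, and let $n_1,\dots,n_m$ be integers. Unless $m=1$ and $g_1^{n_1}=1$, we have $$\mathrm{cl}_G(g_1^{n_1}g_2^{n_2}\cdots g_m^{n_m})\ \ge\ \mathrm{scl}_G(g)\left|\sum_{i=1}^m n_i\right|-\frac{m}{2}+1.$$
   Context: For a group $G$, $[G,G]$ is its commutator subgroup. For $h\in[G,G]$, the commutator length $\mathrm{cl}_G(h)$ is the least $n\ge 0$ such that $h=[a_1,b_1]\cdots[a_n,b_n]$ for some $a_i,b_i\in G$. The stable commutator length is $\mathrm{scl}_G(g)=\lim_{n\to\infty}\mathrm{cl}_G(g^n)/n$ for $g\in[G,G]$. Note that a product of conjugates of $g\in[G,G]$ lies in $[G,G]$. *)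

theory Defs
  imports "HOL-Algebra.Algebra" "HOL-Analysis.Analysis"
begin

definition commutator :: "('a, 'b) monoid_scheme \<Rightarrow> 'a \<Rightarrow> 'a \<Rightarrow> 'a" where
  "commutator G a b = a \<otimes>\<^bsub>G\<^esub> b \<otimes>\<^bsub>G\<^esub> inv\<^bsub>G\<^esub> a \<otimes>\<^bsub>G\<^esub> inv\<^bsub>G\<^esub> b"

definition comm_prod :: "('a, 'b) monoid_scheme \<Rightarrow> ('a \<times> 'a) list \<Rightarrow> 'a" where
  "comm_prod G ps = foldr (\<lambda>(a, b) acc. commutator G a b \<otimes>\<^bsub>G\<^esub> acc) ps \<one>\<^bsub>G\<^esub>"

definition cl :: "('a, 'b) monoid_scheme \<Rightarrow> 'a \<Rightarrow> nat" where
  "cl G h = (LEAST n. \<exists>ps. length ps = n \<and> (\<forall>(a, b) \<in> set ps. a \<in> carrier G \<and> b \<in> carrier G)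
                          \<and> h = comm_prod G ps)"

definition scl :: "('a, 'b) monoid_scheme \<Rightarrow> 'a \<Rightarrow> real" where
  "scl G g = lim (\<lambda>n::nat. real (cl G (g [^]\<^bsub>G\<^esub> n)) / real n)"

definition pow_prod :: "('a, 'b) monoid_scheme \<Rightarrow> ('a \<times> int) list \<Rightarrow> 'a" where
  "pow_prod G ps = foldr (\<lambda>(x, k) acc. (x [^]\<^bsub>G\<^esub> k) \<otimes>\<^bsub>G\<^esub> acc) ps \<one>\<^bsub>G\<^esub>"

end

theory Submission
  imports Defs
begin

definition isc :: "('a,'b) monoid_scheme \<Rightarrow> nat \<Rightarrow> 'a \<Rightarrow> bool" where
  "isc G n z \<longleftrightarrow> (\<exists>ps. length ps = n \<and> (\<forall>(a, b) \<in> set ps. a \<in> carrier G \<and> b \<in> carrier G)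
                          \<and> z = comm_prod G ps)"

definition gprod :: "('a,'b) monoid_scheme \<Rightarrow> 'a \<Rightarrow> ('a \<times> int) list \<Rightarrow> 'a" where
  "gprod G g cks = foldr (\<lambda>(c, k) acc. c \<otimes>\<^bsub>G\<^esub> g [^]\<^bsub>G\<^esub> k \<otimes>\<^bsub>G\<^esub> inv\<^bsub>G\<^esub> c \<otimes>\<^bsub>G\<^esub> acc) cks \<one>\<^bsub>G\<^esub>"

definition gp :: "('a,'b) monoid_scheme \<Rightarrow> 'a \<Rightarrow> nat \<Rightarrow> int \<Rightarrow> 'a \<Rightarrow> bool" where
  "gp G g r S z \<longleftrightarrow> (\<exists>cks. length cks = r \<and> (\<forall>(c, k) \<in> set cks. c \<in> carrier G)
     \<and> sum_list (map snd cks) = S \<and> z = gprod G g cks)"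


lemma fekete:
  fixes f :: "nat \<Rightarrow> real"
  assumes nn: "\<And>n. 0 \<le> f n" and sub: "\<And>a b. f (a + b) \<le> f a + f b"
  shows "(\<lambda>n. f n / real n) \<longlonglongrightarrow> Inf ((\<lambda>n. f n / real n) ` {1..})"
proof -
  define L where "L = Inf ((\<lambda>n. f n / real n) ` {1..})"
  have bdd: "bdd_below ((\<lambda>n. f n / real n) ` {1..})"
    by (rule bdd_belowI[of _ 0]) (auto intro: divide_nonneg_nonneg nn)
  have low: "L \<le> f n / real n" if "n \<ge> 1" for n
    unfolding L_def by (rule cInf_lower) (use that bdd in auto)
  have qd: "f (q*d + r) \<le> real q * f d + f r" for q d r
  proof (induction q)
    case 0 show ?case by simp
  next
    case (Suc q)
    have "f (Suc q * d + r) = f (d + (q*d + r))" by (simp add: add.assoc)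
    also have "\<dots> \<le> f d + f (q*d+r)" by (rule sub)
    also have "\<dots> \<le> f d + (real q * f d + f r)" using Suc by simp
    finally show ?case by (simp add: algebra_simps)
  qed
  show ?thesis unfolding L_def[symmetric]
  proof (rule LIMSEQ_I)
    fix r :: real assume r: "0 < r"
    have ne: "(\<lambda>n. f n / real n) ` {1..} \<noteq> {}" by auto
    have "Inf ((\<lambda>n. f n / real n) ` {1..}) < L + r/2" using r L_def by simp
    then have "\<exists>x\<in>(\<lambda>n. f n / real n) ` {1..}. x < L + r/2" using cInf_less_iff[OF ne bdd] by blast
    then obtain d where d: "d \<ge> 1" "f d / real d < L + r/2" by auto
    define B where "B = Max (f ` {..<d})"
    have Bge: "f j \<le> B" if "j < d" for j unfolding B_def by (rule Max_ge) (use that in auto)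
    have B0: "0 \<le> B" using Bge[of 0] nn[of 0] d(1) by auto
    obtain N0 :: nat where N0: "real N0 > 2*B/r" using reals_Archimedean2 by blast
    show "\<exists>no. \<forall>n\<ge>no. norm (f n / real n - L) < r"
    proof (intro exI[of _ "max d (Suc N0)"] allI impI)
      fix n assume n: "max d (Suc N0) \<le> n"
      have nd: "n \<ge> d" and nN: "real n > 2*B/r" and n1: "n \<ge> 1" using n N0 d(1) by auto
      have npos: "real n > 0" using n1 by simp
      have dpos: "real d > 0" using d(1) by simp
      have "f n = f ((n div d) * d + n mod d)" by simp
      also have "\<dots> \<le> real (n div d) * f d + f (n mod d)" by (rule qd)
      also have "f (n mod d) \<le> B" using Bge d(1) by simp
      also have "real (n div d) * f d \<le> (real n / real d) * f d"
      proof (rule mult_right_mono[OF _ nn])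
        have "(n div d) * d \<le> n" by (simp add: div_times_less_eq_dividend)
        then have "real (n div d) * real d \<le> real n" by (metis of_nat_le_iff of_nat_mult)
        then show "real (n div d) \<le> real n / real d" using dpos by (simp add: field_simps)
      qed
      finally have fn: "f n \<le> real n * (f d / real d) + B" by simp
      have "f n / real n \<le> f d / real d + B / real n"
        using fn npos by (simp add: field_simps)
      moreover have "B / real n < r / 2"
        using nN r npos B0 by (simp add: field_simps)
      ultimately have "f n / real n < L + r" using d(2) by linarith
      moreover have "L \<le> f n / real n" using low n1 by simp
      ultimately show "norm (f n / real n - L) < r" by simp
    qed
  qed
qed

context group begin

lemma rc1: "x \<in> carrier G \<Longrightarrow> z \<in> carrier G \<Longrightarrow> x \<otimes> (inv x \<otimes> z) = z"
  by (simp add: m_assoc[symmetric])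
lemma rc2: "x \<in> carrier G \<Longrightarrow> z \<in> carrier G \<Longrightarrow> inv x \<otimes> (x \<otimes> z) = z"
  by (simp add: m_assoc[symmetric])

lemmas gsimps = m_assoc rc1 rc2 inv_mult_group

lemma commutator_closed[simp]: "a \<in> carrier G \<Longrightarrow> b \<in> carrier G \<Longrightarrow> commutator G a b \<in> carrier G"
  by (simp add: commutator_def)

lemma comm_prod_Nil[simp]: "comm_prod G [] = \<one>" by (simp add: comm_prod_def)
lemma comm_prod_Cons[simp]: "comm_prod G ((a,b)#ps) = commutator G a b \<otimes> comm_prod G ps"
  by (simp add: comm_prod_def)

lemma comm_prod_closed:
  "\<forall>(a, b) \<in> set ps. a \<in> carrier G \<and> b \<in> carrier G \<Longrightarrow> comm_prod G ps \<in> carrier G"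
  by (induction ps) auto

lemma comm_prod_append:
  "\<forall>(a, b) \<in> set ps. a \<in> carrier G \<and> b \<in> carrier G \<Longrightarrow> \<forall>(a, b) \<in> set qs. a \<in> carrier G \<and> b \<in> carrier G
   \<Longrightarrow> comm_prod G (ps @ qs) = comm_prod G ps \<otimes> comm_prod G qs"
  by (induction ps) (auto simp: m_assoc comm_prod_closed)

lemma isc_closed: "isc G n z \<Longrightarrow> z \<in> carrier G"
  unfolding isc_def using comm_prod_closed by blast

lemma isc_one: "isc G 0 \<one>"
  unfolding isc_def by auto

lemma isc_comm: "a \<in> carrier G \<Longrightarrow> b \<in> carrier G \<Longrightarrow> isc G 1 (commutator G a b)"
  unfolding isc_def by (rule exI[of _ "[(a,b)]"]) auto

lemma isc_mult: "isc G n x \<Longrightarrow> isc G m y \<Longrightarrow> isc G (n + m) (x \<otimes> y)"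
  unfolding isc_def
proof (elim exE conjE)
  fix ps qs assume h: "length ps = n" "\<forall>(a, b)\<in>set ps. a \<in> carrier G \<and> b \<in> carrier G" "x = comm_prod G ps"
    "length qs = m" "\<forall>(a, b)\<in>set qs. a \<in> carrier G \<and> b \<in> carrier G" "y = comm_prod G qs"
  show "\<exists>ps. length ps = n + m \<and> (\<forall>(a, b)\<in>set ps. a \<in> carrier G \<and> b \<in> carrier G) \<and> x \<otimes> y = comm_prod G ps"
    by (rule exI[of _ "ps @ qs"]) (use h comm_prod_append in auto)
qed

lemma commutator_one: "commutator G \<one> \<one> = \<one>"
  by (simp add: commutator_def)

lemma isc_mono: "isc G n x \<Longrightarrow> n \<le> m \<Longrightarrow> isc G m x"
proof -
  assume a: "isc G n x" "n \<le> m"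
  have "isc G (m - n) \<one>"
    unfolding isc_def
  proof (rule exI[of _ "replicate (m - n) (\<one>, \<one>)"])
    have "comm_prod G (replicate k (\<one>, \<one>)) = \<one>" for k
      by (induction k) (auto simp: commutator_one)
    then show "length (replicate (m - n) (\<one>, \<one>)) = m - n \<and>
      (\<forall>(a, b)\<in>set (replicate (m - n) (\<one>, \<one>)). a \<in> carrier G \<and> b \<in> carrier G) \<and>
      \<one> = comm_prod G (replicate (m - n) (\<one>, \<one>))" by auto
  qed
  hence "isc G (n + (m - n)) (x \<otimes> \<one>)" using isc_mult a by blast
  thus ?thesis using a isc_closed[OF a(1)] by simp
qed

lemma conj_commutator:
  "a \<in> carrier G \<Longrightarrow> b \<in> carrier G \<Longrightarrow> c \<in> carrier G \<Longrightarrow>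
   c \<otimes> commutator G a b \<otimes> inv c = commutator G (c \<otimes> a \<otimes> inv c) (c \<otimes> b \<otimes> inv c)"
  by (simp add: commutator_def gsimps)

lemma isc_conj: "isc G n x \<Longrightarrow> c \<in> carrier G \<Longrightarrow> isc G n (c \<otimes> x \<otimes> inv c)"
  unfolding isc_def
proof (elim exE conjE)
  fix ps assume h: "length ps = n" "\<forall>(a, b)\<in>set ps. a \<in> carrier G \<and> b \<in> carrier G" "x = comm_prod G ps"
    and c: "c \<in> carrier G"
  let ?f = "\<lambda>(a,b). (c \<otimes> a \<otimes> inv c, c \<otimes> b \<otimes> inv c)"
  have "\<forall>(a, b)\<in>set ps. a \<in> carrier G \<and> b \<in> carrier G \<Longrightarrow>
        c \<otimes> comm_prod G ps \<otimes> inv c = comm_prod G (map ?f ps)"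
  proof (induction ps)
    case Nil then show ?case using c by simp
  next
    case (Cons p ps)
    obtain a b where p: "p = (a,b)" by (cases p)
    have ab: "a \<in> carrier G" "b \<in> carrier G" using Cons.prems p by auto
    have cl: "comm_prod G ps \<in> carrier G" using Cons.prems comm_prod_closed by auto
    have "c \<otimes> comm_prod G (p # ps) \<otimes> inv c
        = (c \<otimes> commutator G a b \<otimes> inv c) \<otimes> (c \<otimes> comm_prod G ps \<otimes> inv c)"
      using ab cl c p by (simp add: gsimps)
    also have "\<dots> = comm_prod G (map ?f (p # ps))"
      using Cons ab c p by (simp add: conj_commutator)
    finally show ?case .
  qed
  then show "\<exists>ps. length ps = n \<and> (\<forall>(a, b)\<in>set ps. a \<in> carrier G \<and> b \<in> carrier G) \<and> c \<otimes> x \<otimes> inv c = comm_prod G ps"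
    using h c by (intro exI[of _ "map ?f ps"]) auto
qed

lemma inv_commutator: "a \<in> carrier G \<Longrightarrow> b \<in> carrier G \<Longrightarrow> inv (commutator G a b) = commutator G b a"
  by (simp add: commutator_def gsimps)

lemma isc_inv: "isc G n x \<Longrightarrow> isc G n (inv x)"
  unfolding isc_def
proof (elim exE conjE)
  fix ps assume h: "length ps = n" "\<forall>(a, b)\<in>set ps. a \<in> carrier G \<and> b \<in> carrier G" "x = comm_prod G ps"
  let ?f = "\<lambda>(a::'a,b::'a). (b,a)"
  have "\<forall>(a, b)\<in>set ps. a \<in> carrier G \<and> b \<in> carrier G \<Longrightarrow>
        inv (comm_prod G ps) = comm_prod G (rev (map ?f ps))"
  proof (induction ps)
    case Nil then show ?case by simp
  next
    case (Cons p ps)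
    obtain a b where p: "p = (a,b)" by (cases p)
    have ab: "a \<in> carrier G" "b \<in> carrier G" using Cons.prems p by auto
    have cl: "comm_prod G ps \<in> carrier G" using Cons.prems comm_prod_closed by auto
    have "inv (comm_prod G (p # ps)) = inv (comm_prod G ps) \<otimes> commutator G b a"
      using ab cl p by (simp add: inv_mult_group inv_commutator)
    also have "\<dots> = comm_prod G (rev (map ?f ps)) \<otimes> comm_prod G [(b,a)]"
      using Cons ab by simp
    also have "\<dots> = comm_prod G (rev (map ?f (p # ps)))"
      using Cons.prems ab p by (subst comm_prod_append[symmetric]) auto
    finally show ?case .
  qed
  then show "\<exists>ps. length ps = n \<and> (\<forall>(a, b)\<in>set ps. a \<in> carrier G \<and> b \<in> carrier G) \<and> inv x = comm_prod G ps"
    using h by (intro exI[of _ "rev (map ?f ps)"]) auto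
qed


lemma conj_pow: "c \<in> carrier G \<Longrightarrow> z \<in> carrier G \<Longrightarrow>
   (c \<otimes> z \<otimes> inv c) [^] (n::nat) = c \<otimes> z [^] n \<otimes> inv c"
  by (induction n) (simp_all add: gsimps)

lemma pow_SS: "x \<in> carrier G \<Longrightarrow> x [^] Suc (Suc n) = x \<otimes> (x [^] n \<otimes> x)"
  by (metis nat_pow_Suc2 nat_pow_Suc)

lemma K1:
  assumes x: "x \<in> carrier G" and y: "y \<in> carrier G"
  shows "\<exists>F. isc G q F \<and> (x \<otimes> y) [^] (2*q) = y [^] (2*q) \<otimes> F \<otimes> x [^] (2*q)"
proof (induction q)
  case 0 then show ?case using isc_one x y by (intro exI[of _ \<one>]) simp
next
  case (Suc q)
  then obtain F where F: "isc G q F" "(x \<otimes> y) [^] (2*q) = y [^] (2*q) \<otimes> F \<otimes> x [^] (2*q)" by blast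
  have Fc: "F \<in> carrier G" using isc_closed[OF F(1)] .
  define PX where "PX = x [^] (2*q)"
  define PY where "PY = y [^] (2*q)"
  have PXY: "PX \<in> carrier G" "PY \<in> carrier G" using x y by (auto simp: PX_def PY_def)
  define F' where "F' = (inv (y \<otimes> y) \<otimes> F \<otimes> (y \<otimes> y)) \<otimes>
     (inv y \<otimes> commutator G (inv y \<otimes> (PX \<otimes> x)) (y \<otimes> x \<otimes> y) \<otimes> inv (inv y))"
  have i1: "isc G q (inv (y \<otimes> y) \<otimes> F \<otimes> inv (inv (y \<otimes> y)))"
    using isc_conj[OF F(1), of "inv (y \<otimes> y)"] x y by simp
  have i2: "isc G 1 (inv y \<otimes> commutator G (inv y \<otimes> (PX \<otimes> x)) (y \<otimes> x \<otimes> y) \<otimes> inv (inv y))"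
    by (rule isc_conj[OF isc_comm]) (use x y PXY in auto)
  have "isc G (q + 1) F'" unfolding F'_def using isc_mult[OF i1 i2] x y by simp
  moreover
  have p1: "x [^] (2 * Suc q) = x \<otimes> (PX \<otimes> x)" using x unfolding PX_def
    using pow_SS[OF x, of "2*q"] by simp
  have p2: "y [^] (2 * Suc q) = PY \<otimes> (y \<otimes> y)" using y unfolding PY_def
    by (simp add: m_assoc)
  have p5: "(x \<otimes> y) [^] (2 * Suc q) = (x \<otimes> y) [^] (2*q) \<otimes> (x \<otimes> y) \<otimes> (x \<otimes> y)"
    by simp
  have "(x \<otimes> y) [^] (2 * Suc q) = y [^] (2 * Suc q) \<otimes> F' \<otimes> x [^] (2 * Suc q)"
    unfolding p1 p2 p5 F(2) F'_def commutator_def PX_def[symmetric] PY_def[symmetric]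
    using x y PXY Fc by (simp add: gsimps)
  ultimately show ?case by (metis Suc_eq_plus1)
qed

lemma II:
  assumes x: "x \<in> carrier G" and y: "y \<in> carrier G"
  shows "\<exists>C. isc G q C \<and>
    (x \<otimes> y) [^] Suc (2*q) = (x \<otimes> y [^] Suc (2*q) \<otimes> inv x) \<otimes> (x [^] Suc (2*q) \<otimes> C)"
proof -
  obtain F where F: "isc G q F" "(x \<otimes> y) [^] (2*q) = y [^] (2*q) \<otimes> F \<otimes> x [^] (2*q)"
    using K1[OF x y] by blast
  have Fc: "F \<in> carrier G" using isc_closed[OF F(1)] .
  define PX where "PX = x [^] (2*q)"
  define PY where "PY = y [^] (2*q)"
  have PXY: "PX \<in> carrier G" "PY \<in> carrier G" using x y by (auto simp: PX_def PY_def)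
  have i: "isc G q (inv PX \<otimes> F \<otimes> inv (inv PX))" using isc_conj[OF F(1), of "inv PX"] PXY by simp
  have "(x \<otimes> y) [^] Suc (2*q) = (x \<otimes> y [^] Suc (2*q) \<otimes> inv x) \<otimes> (x [^] Suc (2*q) \<otimes> (inv PX \<otimes> F \<otimes> inv (inv PX)))"
    unfolding nat_pow_Suc2[OF x] nat_pow_Suc2[OF y] nat_pow_Suc2[OF m_closed[OF x y]] F(2)
      PX_def[symmetric] PY_def[symmetric]
    using x y PXY Fc by (simp add: gsimps)
  with i show ?thesis by blast
qed

lemma comm_pow:
  assumes a: "a \<in> carrier G" and b: "b \<in> carrier G"
  shows "isc G (Suc q) ((commutator G a b) [^] Suc (2*q))"
proof -
  have y: "b \<otimes> inv a \<otimes> inv b \<in> carrier G" using a b by simp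
  obtain C where C: "isc G q C" "(a \<otimes> (b \<otimes> inv a \<otimes> inv b)) [^] Suc (2*q) =
     (a \<otimes> (b \<otimes> inv a \<otimes> inv b) [^] Suc (2*q) \<otimes> inv a) \<otimes> (a [^] Suc (2*q) \<otimes> C)"
    using II[OF a y] by blast
  have Cc: "C \<in> carrier G" using isc_closed[OF C(1)] .
  have e1: "commutator G a b = a \<otimes> (b \<otimes> inv a \<otimes> inv b)" by (simp add: commutator_def a b m_assoc)
  have e2: "(b \<otimes> inv a \<otimes> inv b) [^] Suc (2*q) = b \<otimes> inv (a [^] Suc (2*q)) \<otimes> inv b"
  proof -
    have "(b \<otimes> inv a \<otimes> inv b) [^] Suc (2*q) = b \<otimes> (inv a) [^] Suc (2*q) \<otimes> inv b"
      by (rule conj_pow) (use a b in auto)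
    also have "\<dots> = b \<otimes> inv (a [^] Suc (2*q)) \<otimes> inv b" by (simp only: nat_pow_inv[OF a])
    finally show ?thesis .
  qed
  have "(commutator G a b) [^] Suc (2*q) = commutator G (a \<otimes> b) (inv (a [^] Suc (2*q))) \<otimes> C"
    unfolding e1 C(2) e2 by (unfold commutator_def) (use a b Cc in \<open>simp add: gsimps\<close>)
  moreover have "isc G (1 + q) (commutator G (a \<otimes> b) (inv (a [^] Suc (2*q))) \<otimes> C)"
    by (rule isc_mult[OF isc_comm C(1)]) (use a b in auto)
  ultimately show ?thesis by simp
qed


lemma L5:
  assumes "ps \<noteq> []" "\<forall>(a, b) \<in> set ps. a \<in> carrier G \<and> b \<in> carrier G"
  shows "isc G (length ps + q * (2 * length ps - 1)) ((comm_prod G ps) [^] Suc (2*q))"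
  using assms
proof (induction ps rule: list_nonempty_induct)
  case (single p)
  obtain a b where p: "p = (a,b)" by (cases p)
  have ab: "a \<in> carrier G" "b \<in> carrier G" using single p by auto
  show ?case using comm_pow[OF ab, of q] ab p by simp
next
  case (cons p ps)
  obtain a b where p: "p = (a,b)" by (cases p)
  have ab: "a \<in> carrier G" "b \<in> carrier G" using cons.prems p by auto
  have ps: "\<forall>(a, b) \<in> set ps. a \<in> carrier G \<and> b \<in> carrier G" using cons.prems by auto
  have V: "comm_prod G ps \<in> carrier G" using comm_prod_closed[OF ps] .
  have x: "commutator G a b \<in> carrier G" using ab by simp
  obtain C where C: "isc G q C" "(commutator G a b \<otimes> comm_prod G ps) [^] Suc (2*q) =
    (commutator G a b \<otimes> comm_prod G ps [^] Suc (2*q) \<otimes> inv (commutator G a b)) \<otimes>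
    (commutator G a b [^] Suc (2*q) \<otimes> C)" using II[OF x V] by blast
  have i1: "isc G (length ps + q * (2 * length ps - 1))
     (commutator G a b \<otimes> comm_prod G ps [^] Suc (2*q) \<otimes> inv (commutator G a b))"
    using isc_conj[OF cons.IH[OF ps] x] .
  have i2: "isc G (Suc q + q) (commutator G a b [^] Suc (2*q) \<otimes> C)"
    using isc_mult[OF comm_pow[OF ab] C(1)] .
  note i3 = isc_mult[OF i1 i2]
  have num: "length ps + q * (2 * length ps - 1) + (Suc q + q) = length (p # ps) + q * (2 * length (p # ps) - 1)"
    using cons.hyps by (cases "length ps") (auto simp: algebra_simps)
  have eqW: "comm_prod G (p # ps) [^] Suc (2*q) = (commutator G a b \<otimes> comm_prod G ps [^] Suc (2*q) \<otimes> inv (commutator G a b)) \<otimes>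
    (commutator G a b [^] Suc (2*q) \<otimes> C)"
    by (simp only: p comm_prod_Cons C(2))
  show ?case unfolding eqW num[symmetric] by (rule i3)
qed

lemma gprod_Nil[simp]: "gprod G g [] = \<one>" by (simp add: gprod_def)
lemma gprod_Cons[simp]: "gprod G g ((c,k)#cks) = c \<otimes> g [^] k \<otimes> inv c \<otimes> gprod G g cks"
  by (simp add: gprod_def)

lemma gprod_closed: "g \<in> carrier G \<Longrightarrow> \<forall>(c, k) \<in> set cks. c \<in> carrier G \<Longrightarrow> gprod G g cks \<in> carrier G"
  by (induction cks) auto

lemma gprod_append: "g \<in> carrier G \<Longrightarrow> \<forall>(c, k) \<in> set cks. c \<in> carrier G \<Longrightarrow>
    \<forall>(c, k) \<in> set cks'. c \<in> carrier G \<Longrightarrow>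
    gprod G g (cks @ cks') = gprod G g cks \<otimes> gprod G g cks'"
  by (induction cks) (auto simp: m_assoc gprod_closed)

lemma gp_closed: "g \<in> carrier G \<Longrightarrow> gp G g r S z \<Longrightarrow> z \<in> carrier G"
  unfolding gp_def using gprod_closed by blast

lemma gp_mult: "g \<in> carrier G \<Longrightarrow> gp G g r S z \<Longrightarrow> gp G g r' S' z' \<Longrightarrow> gp G g (r + r') (S + S') (z \<otimes> z')"
  unfolding gp_def
proof (elim exE conjE)
  fix cks cks' assume g: "g \<in> carrier G" and h: "length cks = r" "\<forall>(c, k)\<in>set cks. c \<in> carrier G"
    "sum_list (map snd cks) = S" "z = gprod G g cks"
    "length cks' = r'" "\<forall>(c, k)\<in>set cks'. c \<in> carrier G"
    "sum_list (map snd cks') = S'" "z' = gprod G g cks'"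
  show "\<exists>cks. length cks = r + r' \<and> (\<forall>(c, k)\<in>set cks. c \<in> carrier G) \<and> sum_list (map snd cks) = S + S'
     \<and> z \<otimes> z' = gprod G g cks"
    by (rule exI[of _ "cks @ cks'"]) (use h g gprod_append in auto)
qed

lemma gp_conj: "g \<in> carrier G \<Longrightarrow> gp G g r S z \<Longrightarrow> d \<in> carrier G \<Longrightarrow> gp G g r S (d \<otimes> z \<otimes> inv d)"
  unfolding gp_def
proof (elim exE conjE)
  fix cks assume g: "g \<in> carrier G" and d: "d \<in> carrier G" and h: "length cks = r" "\<forall>(c, k)\<in>set cks. c \<in> carrier G"
    "sum_list (map snd cks) = S" "z = gprod G g cks"
  let ?f = "\<lambda>(c::'a, k::int). (d \<otimes> c, k)"
  have "\<forall>(c, k)\<in>set cks. c \<in> carrier G \<Longrightarrow> d \<otimes> gprod G g cks \<otimes> inv d = gprod G g (map ?f cks)"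
  proof (induction cks)
    case Nil then show ?case using d by simp
  next
    case (Cons ck cks)
    obtain c k where ck: "ck = (c,k)" by (cases ck)
    have c: "c \<in> carrier G" using Cons.prems ck by auto
    have cl: "gprod G g cks \<in> carrier G" using Cons.prems gprod_closed g by auto
    have "d \<otimes> gprod G g (ck # cks) \<otimes> inv d
        = (d \<otimes> c) \<otimes> g [^] k \<otimes> inv (d \<otimes> c) \<otimes> (d \<otimes> gprod G g cks \<otimes> inv d)"
      using c cl d g ck by (simp add: gsimps)
    also have "\<dots> = gprod G g (map ?f (ck # cks))"
      using Cons c ck by simp
    finally show ?case .
  qed
  then show "\<exists>cks. length cks = r \<and> (\<forall>(c, k)\<in>set cks. c \<in> carrier G) \<and> sum_list (map snd cks) = S
     \<and> d \<otimes> z \<otimes> inv d = gprod G g cks"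
    using h d by (intro exI[of _ "map ?f cks"]) (auto simp: case_prod_beta comp_def)
qed

lemma gp_single: "g \<in> carrier G \<Longrightarrow> c \<in> carrier G \<Longrightarrow> gp G g 1 k (c \<otimes> g [^] k \<otimes> inv c)"
  unfolding gp_def by (rule exI[of _ "[(c,k)]"]) auto

lemma conj_int_pow: "c \<in> carrier G \<Longrightarrow> g \<in> carrier G \<Longrightarrow> (c \<otimes> g \<otimes> inv c) [^] (k::int) = c \<otimes> g [^] k \<otimes> inv c"
proof -
  assume c: "c \<in> carrier G" and g: "g \<in> carrier G"
  show ?thesis
  proof (cases "k \<ge> 0")
    case True
    then obtain n where k: "k = int n" using nonneg_int_cases by blast
    have "(c \<otimes> g \<otimes> inv c) [^] k = (c \<otimes> g \<otimes> inv c) [^] n" unfolding k by (rule int_pow_int)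
    also have "\<dots> = c \<otimes> g [^] n \<otimes> inv c" by (rule conj_pow[OF c g])
    also have "g [^] n = g [^] k" unfolding k by (rule int_pow_int[symmetric])
    finally show ?thesis .
  next
    case False
    define n where "n = nat (-k)"
    have k: "k = - int n" using False n_def by simp
    have "(c \<otimes> g \<otimes> inv c) [^] k = inv ((c \<otimes> g \<otimes> inv c) [^] n)" unfolding k
      by (rule int_pow_neg_int) (use c g in simp)
    also have "(c \<otimes> g \<otimes> inv c) [^] n = c \<otimes> g [^] n \<otimes> inv c" by (rule conj_pow[OF c g])
    also have "inv (c \<otimes> g [^] n \<otimes> inv c) = c \<otimes> inv (g [^] n) \<otimes> inv c"
    proof -
      have gn: "g [^] n \<in> carrier G" using g by (rule nat_pow_closed)
      show ?thesis using c gn by (simp add: inv_mult_group m_assoc)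
    qed
    also have "inv (g [^] n) = g [^] k" unfolding k by (rule int_pow_neg_int[OF g, symmetric])
    finally show ?thesis .
  qed
qed

lemma conj_gpow_nat: "c \<in> carrier G \<Longrightarrow> g \<in> carrier G \<Longrightarrow>
   (c \<otimes> g [^] (k::int) \<otimes> inv c) [^] (n::nat) = c \<otimes> g [^] (int n * k) \<otimes> inv c"
proof -
  assume c: "c \<in> carrier G" and g: "g \<in> carrier G"
  have gk: "g [^] k \<in> carrier G" using g by simp
  have "(c \<otimes> g [^] k \<otimes> inv c) [^] n = c \<otimes> (g [^] k) [^] n \<otimes> inv c" by (rule conj_pow[OF c gk])
  also have "(g [^] k) [^] n = (g [^] k) [^] (int n)" by (rule int_pow_int[symmetric])
  also have "\<dots> = g [^] (k * int n)" by (rule int_pow_pow[OF g])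
  also have "k * int n = int n * k" by (rule mult.commute)
  finally show ?thesis .
qed

lemma merge_list:
  assumes g: "g \<in> carrier G" and c: "c \<in> carrier G" and rest: "\<forall>(c, k) \<in> set rest. c \<in> carrier G"
  shows "\<exists>d C. d \<in> carrier G \<and> isc G (length rest) C \<and>
    gprod G g ((c,k)#rest) = d \<otimes> g [^] (k + sum_list (map snd rest)) \<otimes> inv d \<otimes> C"
  using c rest
proof (induction rest arbitrary: c k)
  case Nil then show ?case using g isc_one by (intro exI[of _ c] exI[of _ \<one>]) simp
next
  case (Cons ck rest)
  obtain c' k' where ck: "ck = (c',k')" by (cases ck)
  have c': "c' \<in> carrier G" and rest: "\<forall>(c, k) \<in> set rest. c \<in> carrier G" using Cons.prems ck by auto
  obtain d C where dC: "d \<in> carrier G" "isc G (length rest) C"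
    "gprod G g ((c',k')#rest) = d \<otimes> g [^] (k' + sum_list (map snd rest)) \<otimes> inv d \<otimes> C"
    using Cons.IH[OF c' rest] by blast
  define S where "S = k' + sum_list (map snd rest)"
  have Cc: "C \<in> carrier G" using isc_closed[OF dC(2)] .
  have x: "g [^] k \<in> carrier G" and X: "g [^] S \<in> carrier G" using g by auto
  have "gprod G g ((c,k)#ck#rest) = c \<otimes> g [^] k \<otimes> inv c \<otimes> (d \<otimes> g [^] S \<otimes> inv d \<otimes> C)"
    using dC(3) ck S_def by simp
  also have "\<dots> = c \<otimes> (g [^] k \<otimes> g [^] S) \<otimes> inv c \<otimes>
      ((c \<otimes> commutator G (inv (g [^] S)) (inv c \<otimes> d) \<otimes> inv c) \<otimes> C)"
    unfolding commutator_def using x X Cc dC(1) Cons.prems(1) by (simp add: gsimps)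
  also have "g [^] k \<otimes> g [^] S = g [^] (k + sum_list (map snd (ck#rest)))"
    using int_pow_mult[OF g] ck S_def by (simp add: add.assoc)
  finally have e: "gprod G g ((c,k)#ck#rest) = c \<otimes> g [^] (k + sum_list (map snd (ck#rest))) \<otimes> inv c \<otimes>
      ((c \<otimes> commutator G (inv (g [^] S)) (inv c \<otimes> d) \<otimes> inv c) \<otimes> C)" .
  have "isc G (1 + length rest) ((c \<otimes> commutator G (inv (g [^] S)) (inv c \<otimes> d) \<otimes> inv c) \<otimes> C)"
    by (rule isc_mult[OF isc_conj[OF isc_comm] dC(2)]) (use X dC(1) Cons.prems(1) in auto)
  then show ?case using e Cons.prems(1) by (intro exI[of _ c] exI[of _ "(c \<otimes> commutator G (inv (g [^] S)) (inv c \<otimes> d) \<otimes> inv c) \<otimes> C"]) auto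
qed

lemma merge:
  assumes g: "g \<in> carrier G" and "gp G g r S z" and "r \<ge> 1"
  shows "\<exists>d C. d \<in> carrier G \<and> isc G (r - 1) C \<and> z = d \<otimes> g [^] S \<otimes> inv d \<otimes> C"
proof -
  obtain cks where h: "length cks = r" "\<forall>(c, k)\<in>set cks. c \<in> carrier G" "sum_list (map snd cks) = S" "z = gprod G g cks"
    using assms(2) unfolding gp_def by blast
  obtain c k rest where cks: "cks = (c,k)#rest" using h(1) assms(3) by (cases cks) auto
  obtain d C where dC: "d \<in> carrier G" "isc G (length rest) C"
    "gprod G g ((c,k)#rest) = d \<otimes> g [^] (k + sum_list (map snd rest)) \<otimes> inv d \<otimes> C"
    using merge_list[OF g, of c rest k] h cks by auto
  show ?thesis using dC h cks by (intro exI[of _ d] exI[of _ C]) auto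
qed

lemma L4:
  assumes g: "g \<in> carrier G" and "cks \<noteq> []" and "\<forall>(c, k) \<in> set cks. c \<in> carrier G"
  shows "\<exists>z' C. gp G g (length cks) (int (Suc (2*q)) * sum_list (map snd cks)) z' \<and>
     isc G (q * (length cks - 1)) C \<and> (gprod G g cks) [^] Suc (2*q) = z' \<otimes> C"
  using assms(2,3)
proof (induction cks rule: list_nonempty_induct)
  case (single ck)
  obtain c k where ck: "ck = (c,k)" by (cases ck)
  have c: "c \<in> carrier G" using single ck by auto
  have e0: "gprod G g [ck] = c \<otimes> g [^] k \<otimes> inv c" using ck c g by simp
  have "(gprod G g [ck]) [^] Suc (2*q) = c \<otimes> g [^] (int (Suc (2*q)) * k) \<otimes> inv c"
    unfolding e0 by (rule conj_gpow_nat[OF c g])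
  then show ?case using gp_single[OF g c] isc_one ck c g
    by (intro exI[of _ "c \<otimes> g [^] (int (Suc (2*q)) * k) \<otimes> inv c"] exI[of _ \<one>]) simp
next
  case (cons ck cks)
  obtain c k where ck: "ck = (c,k)" by (cases ck)
  have c: "c \<in> carrier G" and cks: "\<forall>(c, k) \<in> set cks. c \<in> carrier G" using cons.prems ck by auto
  define y where "y = c \<otimes> g [^] k \<otimes> inv c"
  define zr where "zr = gprod G g cks"
  have y: "y \<in> carrier G" using c g y_def by simp
  have zr: "zr \<in> carrier G" using gprod_closed[OF g cks] zr_def by simp
  obtain z' C where IH: "gp G g (length cks) (int (Suc (2*q)) * sum_list (map snd cks)) z'"
     "isc G (q * (length cks - 1)) C" "zr [^] Suc (2*q) = z' \<otimes> C"
    using cons.IH[OF cks] zr_def by blast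
  have z'c: "z' \<in> carrier G" using gp_closed[OF g IH(1)] .
  have Cc: "C \<in> carrier G" using isc_closed[OF IH(2)] .
  obtain C0 where C0: "isc G q C0" "(y \<otimes> zr) [^] Suc (2*q) = (y \<otimes> zr [^] Suc (2*q) \<otimes> inv y) \<otimes> (y [^] Suc (2*q) \<otimes> C0)"
    using II[OF y zr] by blast
  have C0c: "C0 \<in> carrier G" using isc_closed[OF C0(1)] .
  define P where "P = y [^] Suc (2*q)"
  have P: "P \<in> carrier G" using y P_def by simp
  have Pe: "P = c \<otimes> g [^] (int (Suc (2*q)) * k) \<otimes> inv c" unfolding P_def y_def by (rule conj_gpow_nat[OF c g])
  have eq: "(gprod G g (ck # cks)) [^] Suc (2*q) = ((y \<otimes> z' \<otimes> inv y) \<otimes> P) \<otimes>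
     ((inv P \<otimes> (y \<otimes> C \<otimes> inv y) \<otimes> inv (inv P)) \<otimes> C0)"
  proof -
    have e1: "gprod G g (ck # cks) = y \<otimes> zr" using ck y_def zr_def by simp
    have "(gprod G g (ck # cks)) [^] Suc (2*q) = (y \<otimes> (z' \<otimes> C) \<otimes> inv y) \<otimes> (P \<otimes> C0)"
      unfolding e1 C0(2) IH(3) P_def by (rule refl)
    also have "\<dots> = ((y \<otimes> z' \<otimes> inv y) \<otimes> P) \<otimes> ((inv P \<otimes> (y \<otimes> C \<otimes> inv y) \<otimes> inv (inv P)) \<otimes> C0)"
      using y z'c Cc P C0c by (simp add: gsimps)
    finally show ?thesis .
  qed
  have gp1: "gp G g (length cks + 1) (int (Suc (2*q)) * sum_list (map snd cks) + int (Suc (2*q)) * k)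
      ((y \<otimes> z' \<otimes> inv y) \<otimes> P)"
    using gp_mult[OF g gp_conj[OF g IH(1) y] gp_single[OF g c, of "int (Suc (2*q)) * k"]] Pe by simp
  have is1: "isc G (q * (length cks - 1) + q) ((inv P \<otimes> (y \<otimes> C \<otimes> inv y) \<otimes> inv (inv P)) \<otimes> C0)"
    by (rule isc_mult[OF isc_conj[OF isc_conj[OF IH(2) y]] C0(1)]) (use P in auto)
  have A: "q * (length cks - 1) + q = q * (length (ck # cks) - 1)" using cons.hyps
    by (cases "length cks") (auto simp: algebra_simps)
  have B: "int (Suc (2*q)) * sum_list (map snd cks) + int (Suc (2*q)) * k
     = int (Suc (2*q)) * sum_list (map snd (ck # cks))" using ck by (simp add: algebra_simps)
  show ?case
  proof (intro exI conjI)
    show "gp G g (length (ck # cks)) (int (Suc (2*q)) * sum_list (map snd (ck # cks))) ((y \<otimes> z' \<otimes> inv y) \<otimes> P)"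
      using gp1 unfolding B by simp
    show "isc G (q * (length (ck # cks) - 1)) ((inv P \<otimes> (y \<otimes> C \<otimes> inv y) \<otimes> inv (inv P)) \<otimes> C0)"
      using is1 unfolding A .
    show "(gprod G g (ck # cks)) [^] Suc (2*q) = ((y \<otimes> z' \<otimes> inv y) \<otimes> P) \<otimes>
     ((inv P \<otimes> (y \<otimes> C \<otimes> inv y) \<otimes> inv (inv P)) \<otimes> C0)" by (rule eq)
  qed
qed

lemma derived_isc: "z \<in> derived G (carrier G) \<Longrightarrow> \<exists>n. isc G n z"
  unfolding derived_def
proof (induction rule: generate.induct)
  case one then show ?case using isc_one by blast
next
  case (incl h)
  then obtain a b where "a \<in> carrier G" "b \<in> carrier G" "h = a \<otimes> b \<otimes> inv a \<otimes> inv b" by blast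
  then show ?case using isc_comm[of a b] unfolding commutator_def by blast
next
  case (inv h)
  then obtain a b where "a \<in> carrier G" "b \<in> carrier G" "h = a \<otimes> b \<otimes> inv a \<otimes> inv b" by blast
  then show ?case using isc_inv[OF isc_comm[of a b]] unfolding commutator_def by blast
next
  case (eng h1 h2) then show ?case using isc_mult by blast
qed

lemma cl_le: "isc G n z \<Longrightarrow> cl G z \<le> n"
  unfolding cl_def isc_def[symmetric] by (rule Least_le)

lemma cl_isc: "\<exists>n. isc G n z \<Longrightarrow> isc G (cl G z) z"
  unfolding cl_def isc_def[symmetric] by (rule LeastI_ex)


lemma isc_npow: "isc G n x \<Longrightarrow> \<exists>n'. isc G n' (x [^] (j::nat))"
proof (induction j)
  case 0 then show ?case using isc_one by auto
next
  case (Suc j)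
  then obtain n' where "isc G n' (x [^] j)" by blast
  then show ?case using isc_mult[OF _ Suc.prems] by auto
qed

lemma isc_ipow: "isc G n x \<Longrightarrow> \<exists>n'. isc G n' (x [^] (j::int))"
proof -
  assume a: "isc G n x"
  have xc: "x \<in> carrier G" using isc_closed[OF a] .
  show ?thesis
  proof (cases "j \<ge> 0")
    case True
    define i where "i = nat j"
    have j: "j = int i" using True i_def by simp
    obtain n' where "isc G n' (x [^] i)" using isc_npow[OF a] by blast
    then show ?thesis unfolding j int_pow_int by blast
  next
    case False
    define i where "i = nat (-j)"
    have j: "j = - int i" using False i_def by simp
    obtain n' where "isc G n' (x [^] i)" using isc_npow[OF a] by blast
    then have "isc G n' (inv (x [^] i))" by (rule isc_inv)
    then show ?thesis unfolding j int_pow_neg_int[OF xc] by blast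
  qed
qed

lemma gprod_isc: "\<exists>n. isc G n g \<Longrightarrow> g \<in> carrier G \<Longrightarrow> \<forall>(c, k) \<in> set cks. c \<in> carrier G \<Longrightarrow> \<exists>n. isc G n (gprod G g cks)"
proof (induction cks)
  case Nil then show ?case using isc_one by auto
next
  case (Cons ck cks)
  obtain c k where ck: "ck = (c,k)" by (cases ck)
  have c: "c \<in> carrier G" using Cons.prems ck by auto
  obtain n0 where n0: "isc G n0 g" using Cons.prems by blast
  obtain n1 where n1: "isc G n1 (g [^] k)" using isc_ipow[OF n0] by blast
  obtain n2 where n2: "isc G n2 (gprod G g cks)" using Cons by auto
  show ?case using isc_mult[OF isc_conj[OF n1 c] n2] ck by auto
qed

lemma pp_gprod:
  assumes "\<forall>x\<in>set gs. f x \<in> carrier G \<and> x = f x \<otimes> g \<otimes> inv (f x)" "length gs = length ns" "g \<in> carrier G"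
  shows "pow_prod G (zip gs ns) = gprod G g (zip (map f gs) ns)"
  using assms
proof (induction gs arbitrary: ns)
  case Nil then show ?case by (simp add: pow_prod_def)
next
  case (Cons x gs)
  then obtain n ns' where ns: "ns = n # ns'" by (cases ns) auto
  have fx: "f x \<in> carrier G" "x = f x \<otimes> g \<otimes> inv (f x)" using Cons.prems by auto
  have IH: "pow_prod G (zip gs ns') = gprod G g (zip (map f gs) ns')" using Cons ns by auto
  have "pow_prod G (zip (x # gs) ns) = x [^] n \<otimes> pow_prod G (zip gs ns')"
    using ns by (simp add: pow_prod_def)
  also have "x [^] n = f x \<otimes> g [^] n \<otimes> inv (f x)" using fx conj_int_pow[OF fx(1) Cons.prems(3)] by metis
  finally show ?case using IH ns by simp
qed

lemma unconj: "d \<in> carrier G \<Longrightarrow> XX \<in> carrier G \<Longrightarrow> isc G a W \<Longrightarrow> isc G b C \<Longrightarrow>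
  W = d \<otimes> XX \<otimes> inv d \<otimes> C \<Longrightarrow> isc G (a + b) XX"
proof -
  assume d: "d \<in> carrier G" and XX: "XX \<in> carrier G" and W: "isc G a W" and C: "isc G b C"
    and e: "W = d \<otimes> XX \<otimes> inv d \<otimes> C"
  have Cc: "C \<in> carrier G" using isc_closed[OF C] .
  have "XX = inv d \<otimes> (W \<otimes> inv C) \<otimes> inv (inv d)" using d XX Cc e by (simp add: gsimps)
  moreover have "isc G (a + b) (inv d \<otimes> (W \<otimes> inv C) \<otimes> inv (inv d))"
    by (rule isc_conj[OF isc_mult[OF W isc_inv[OF C]]]) (use d in simp)
  ultimately show ?thesis by simp
qed

lemma main_bound:
  assumes g: "g \<in> carrier G" and gisc: "\<exists>n. isc G n g" and ne: "cks \<noteq> []"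
    and carr: "\<forall>(c, k) \<in> set cks. c \<in> carrier G"
    and not1: "\<not> (length cks = 1 \<and> gprod G g cks = \<one>)"
  shows "2 * cl G (gprod G g cks) + length cks \<ge> 2 \<and>
    isc G (q * (2 * cl G (gprod G g cks) + length cks - 2) + cl G (gprod G g cks) + length cks - 1)
      (g [^] (int (Suc (2*q)) * sum_list (map snd cks)))"
proof -
  define h where "h = gprod G g cks"
  define k where "k = cl G h"
  define m where "m = length cks"
  define N where "N = sum_list (map snd cks)"
  define P where "P = Suc (2*q)"
  have m1: "m \<ge> 1" using ne m_def by (cases cks) auto
  have hc: "h \<in> carrier G" using gprod_closed[OF g carr] h_def by simp
  have hex: "\<exists>n. isc G n h" using gprod_isc[OF gisc g carr] h_def by simp
  have gPN: "g [^] (int P * N) \<in> carrier G" using g by simp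
  show ?thesis
  proof (cases "h = \<one>")
    case False
    have hk: "isc G k h" using cl_isc[OF hex] k_def by simp
    then obtain ps where ps: "length ps = k" "\<forall>(a, b) \<in> set ps. a \<in> carrier G \<and> b \<in> carrier G"
      "h = comm_prod G ps" unfolding isc_def by blast
    have psne: "ps \<noteq> []" using False ps by auto
    have k1: "k \<ge> 1" using psne ps(1) by (cases ps) auto
    have i1: "isc G (k + q * (2 * k - 1)) (h [^] P)"
      using L5[OF psne ps(2), of q] ps(1,3) P_def by simp
    obtain z' C1 where L4r: "gp G g m (int P * N) z'" "isc G (q * (m - 1)) C1" "h [^] P = z' \<otimes> C1"
      using L4[OF g ne carr, of q] h_def m_def N_def P_def by blast
    have z'c: "z' \<in> carrier G" using gp_closed[OF g L4r(1)] .
    have C1c: "C1 \<in> carrier G" using isc_closed[OF L4r(2)] .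
    have "z' = h [^] P \<otimes> inv C1" using L4r(3) z'c C1c by (simp add: gsimps)
    then have i2: "isc G (k + q * (2 * k - 1) + q * (m - 1)) z'"
      using isc_mult[OF i1 isc_inv[OF L4r(2)]] by simp
    obtain d C3 where mg: "d \<in> carrier G" "isc G (m - 1) C3" "z' = d \<otimes> g [^] (int P * N) \<otimes> inv d \<otimes> C3"
      using merge[OF g L4r(1)] m1 by blast
    have i3: "isc G (k + q * (2 * k - 1) + q * (m - 1) + (m - 1)) (g [^] (int P * N))"
      by (rule unconj[OF mg(1) gPN i2 mg(2) mg(3)])
    have num: "k + q * (2 * k - 1) + q * (m - 1) + (m - 1) = q * (2 * k + m - 2) + k + m - 1"
      using k1 m1 by (cases k; cases m) (simp_all add: algebra_simps)
    show ?thesis using i3 num k1 m1 unfolding k_def h_def m_def N_def P_def by simp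
  next
    case True
    have k0: "k = 0" using cl_le[OF isc_one] True k_def by simp
    obtain ck rest where ckr: "cks = ck # rest" using ne by (cases cks) auto
    obtain c k1 where ck: "ck = (c,k1)" by (cases ck)
    have c: "c \<in> carrier G" and carr': "\<forall>(c, k) \<in> set rest. c \<in> carrier G" using carr ckr ck by auto
    have restne: "rest \<noteq> []" using not1 True ckr h_def by auto
    have m2: "m \<ge> 2" using restne ckr m_def by (cases rest) auto
    define y where "y = c \<otimes> g [^] k1 \<otimes> inv c"
    define hr where "hr = gprod G g rest"
    have y: "y \<in> carrier G" using c g y_def by simp
    have hrc: "hr \<in> carrier G" using gprod_closed[OF g carr'] hr_def by simp
    have "y \<otimes> hr = \<one>" using True h_def ckr ck y_def hr_def by simp
    then have yi: "inv hr = y" using inv_equality y hrc by blast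
    obtain z' C where L4r: "gp G g (length rest) (int P * sum_list (map snd rest)) z'"
      "isc G (q * (length rest - 1)) C" "hr [^] P = z' \<otimes> C"
      using L4[OF g restne carr', of q] hr_def P_def by blast
    have z'c: "z' \<in> carrier G" using gp_closed[OF g L4r(1)] .
    have Cc: "C \<in> carrier G" using isc_closed[OF L4r(2)] .
    have yP: "y [^] P = inv (z' \<otimes> C)"
      using nat_pow_inv[OF hrc, of P] L4r(3) yi by simp
    have yP2: "y [^] P = c \<otimes> g [^] (int P * k1) \<otimes> inv c" unfolding y_def by (rule conj_gpow_nat[OF c g])
    define W where "W = y [^] P \<otimes> z'"
    have We: "W = inv C" unfolding W_def yP using z'c Cc by (simp add: gsimps)
    have iW: "isc G (q * (length rest - 1)) W" using isc_inv[OF L4r(2)] We by simp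
    have gW: "gp G g (1 + length rest) (int P * k1 + int P * sum_list (map snd rest)) W"
      unfolding W_def yP2 by (rule gp_mult[OF g gp_single[OF g c] L4r(1)])
    have gW': "gp G g m (int P * N) W" using gW ckr ck m_def N_def by (simp add: algebra_simps)
    obtain d C3 where mg: "d \<in> carrier G" "isc G (m - 1) C3" "W = d \<otimes> g [^] (int P * N) \<otimes> inv d \<otimes> C3"
      using merge[OF g gW'] m2 by auto
    have i3: "isc G (q * (length rest - 1) + (m - 1)) (g [^] (int P * N))"
      by (rule unconj[OF mg(1) gPN iW mg(2) mg(3)])
    have num: "q * (length rest - 1) + (m - 1) = q * (2 * k + m - 2) + k + m - 1"
      using k0 m2 ckr m_def by simp
    show ?thesis using i3 num k0 m2 unfolding k_def h_def m_def N_def P_def by simp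
  qed
qed

end

theorem corollary2p2:
  fixes G :: "('a, 'b) monoid_scheme" and g :: 'a and gs :: "'a list" and ns :: "int list"
  assumes "group G"
    and "g \<in> derived G (carrier G)"
    and "length gs = length ns" and "length gs \<ge> 1"
    and "\<forall>x \<in> set gs. \<exists>c \<in> carrier G. x = c \<otimes>\<^bsub>G\<^esub> g \<otimes>\<^bsub>G\<^esub> inv\<^bsub>G\<^esub> c"
    and "\<not> (length gs = 1 \<and> hd gs [^]\<^bsub>G\<^esub> hd ns = \<one>\<^bsub>G\<^esub>)"
  shows "real (cl G (pow_prod G (zip gs ns)))
           \<ge> scl G g * \<bar>real_of_int (sum_list ns)\<bar> - real (length gs) / 2 + 1"
proof -
  interpret group G by (rule assms(1))
  have g: "g \<in> carrier G" using assms(2) derived_in_carrier[of "carrier G"] by auto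
  have gisc: "\<exists>n. isc G n g" using derived_isc assms(2) by blast
  obtain f where f: "\<forall>x\<in>set gs. f x \<in> carrier G \<and> x = f x \<otimes>\<^bsub>G\<^esub> g \<otimes>\<^bsub>G\<^esub> inv\<^bsub>G\<^esub> (f x)"
  proof -
    have "\<forall>x\<in>set gs. \<exists>c. c \<in> carrier G \<and> x = c \<otimes>\<^bsub>G\<^esub> g \<otimes>\<^bsub>G\<^esub> inv\<^bsub>G\<^esub> c" using assms(5) by blast
    then show ?thesis using bchoice that by metis
  qed
  define cks where "cks = zip (map f gs) ns"
  have hdef: "pow_prod G (zip gs ns) = gprod G g cks"
    unfolding cks_def by (rule pp_gprod[OF f assms(3) g])
  have lc: "length cks = length gs" using assms(3) cks_def by simp
  have ne: "cks \<noteq> []" using lc assms(4) by auto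
  have carr: "\<forall>(c, k) \<in> set cks. c \<in> carrier G"
    unfolding cks_def using f by (auto dest!: set_zip_leftD)
  have Nsum: "sum_list (map snd cks) = sum_list ns" unfolding cks_def using assms(3) by simp
  have not1: "\<not> (length cks = 1 \<and> gprod G g cks = \<one>\<^bsub>G\<^esub>)"
  proof
    assume a: "length cks = 1 \<and> gprod G g cks = \<one>\<^bsub>G\<^esub>"
    then obtain x n where "gs = [x]" "ns = [n]" using lc assms(3)
      by (metis One_nat_def length_0_conv length_Suc_conv)
    moreover have "x \<in> carrier G" using f g \<open>gs = [x]\<close> by (metis list.set_intros(1) m_closed inv_closed)
    ultimately have "pow_prod G (zip gs ns) = hd gs [^]\<^bsub>G\<^esub> hd ns" by (simp add: pow_prod_def)
    then show False using a hdef assms(6) lc by simp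
  qed
  define k where "k = cl G (gprod G g cks)"
  define m where "m = length gs"
  define N where "N = sum_list ns"
  have MB: "\<And>q. 2 * k + m \<ge> 2 \<and>
    isc G (q * (2 * k + m - 2) + k + m - 1) (g [^]\<^bsub>G\<^esub> (int (Suc (2*q)) * N))"
    using main_bound[OF g gisc ne carr not1] k_def m_def N_def lc Nsum by simp
  have km: "2 * k + m \<ge> 2" using MB by blast
  have goal_eq: "cl G (pow_prod G (zip gs ns)) = k" using hdef k_def by simp
  show ?thesis
  proof (cases "N = 0")
    case True
    then show ?thesis using km goal_eq N_def m_def by simp
  next
    case False
    define M where "M = nat \<bar>N\<bar>"
    have M1: "M \<ge> 1" using False M_def by simp
    have absN: "\<bar>real_of_int N\<bar> = real M" using M_def by simp
    define F where "F = (\<lambda>n::nat. real (cl G (g [^]\<^bsub>G\<^esub> n)))"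
    have gpow_ex: "\<exists>n'. isc G n' (g [^]\<^bsub>G\<^esub> (j::nat))" for j using gisc isc_npow by blast
    have Fnn: "\<And>n. 0 \<le> F n" unfolding F_def by simp
    have Fsub: "\<And>a b. F (a + b) \<le> F a + F b"
    proof -
      fix a b :: nat
      have "isc G (cl G (g [^]\<^bsub>G\<^esub> a) + cl G (g [^]\<^bsub>G\<^esub> b)) (g [^]\<^bsub>G\<^esub> a \<otimes>\<^bsub>G\<^esub> g [^]\<^bsub>G\<^esub> b)"
        by (rule isc_mult[OF cl_isc[OF gpow_ex] cl_isc[OF gpow_ex]])
      then have "cl G (g [^]\<^bsub>G\<^esub> (a + b)) \<le> cl G (g [^]\<^bsub>G\<^esub> a) + cl G (g [^]\<^bsub>G\<^esub> b)"
        using cl_le nat_pow_mult[OF g] by metis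
      then show "F (a + b) \<le> F a + F b" unfolding F_def by simp
    qed
    have lim: "(\<lambda>n. F n / real n) \<longlonglongrightarrow> Inf ((\<lambda>n. F n / real n) ` {1..})"
      by (rule fekete[OF Fnn Fsub])
    define L where "L = Inf ((\<lambda>n. F n / real n) ` {1..})"
    have sclL: "scl G g = L" unfolding scl_def L_def using limI[OF lim] F_def by simp
    have bdd: "bdd_below ((\<lambda>n. F n / real n) ` {1..})"
      by (rule bdd_belowI[of _ 0]) (auto intro: divide_nonneg_nonneg Fnn)
    have low: "L \<le> F n / real n" if "n \<ge> 1" for n
      unfolding L_def by (rule cInf_lower) (use that bdd in auto)
    define A where "A = real (2 * k + m - 2)"
    define B where "B = real k + real m - 1"
    have A0: "A \<ge> 0" using A_def by simp
    have Ae: "A = 2 * real k + real m - 2" using A_def km by (simp add: of_nat_diff)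
    have m1: "m \<ge> 1" using assms(4) m_def by simp
    have B0: "B \<ge> 0" using m1 B_def by simp
    have bound: "L * real M * (2 * real q + 1) \<le> real q * A + B" for q
    proof -
      have is1: "isc G (q * (2 * k + m - 2) + k + m - 1) (g [^]\<^bsub>G\<^esub> (int (Suc (2*q)) * N))" using MB by blast
      have "isc G (q * (2 * k + m - 2) + k + m - 1) (g [^]\<^bsub>G\<^esub> (Suc (2*q) * M))"
      proof (cases "N > 0")
        case True
        have "int (Suc (2*q)) * N = int (Suc (2*q) * M)" using True M_def by (simp add: algebra_simps)
        then show ?thesis using is1 int_pow_int by metis
      next
        case False
        have "int (Suc (2*q)) * N = - int (Suc (2*q) * M)" using False \<open>N \<noteq> 0\<close> M_def by (simp add: algebra_simps)
        then have "g [^]\<^bsub>G\<^esub> (int (Suc (2*q)) * N) = inv\<^bsub>G\<^esub> (g [^]\<^bsub>G\<^esub> (Suc (2*q) * M))"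
          using int_pow_neg_int[OF g] by metis
        then show ?thesis using isc_inv[OF is1] g by simp
      qed
      then have "F (Suc (2*q) * M) \<le> real (q * (2 * k + m - 2) + k + m - 1)"
        unfolding F_def using cl_le by simp
      also have "\<dots> = real q * A + B" using km m1 A_def B_def by (simp add: of_nat_diff)
      finally have Fb: "F (Suc (2*q) * M) \<le> real q * A + B" .
      have pos: "Suc (2*q) * M \<ge> 1" using M1 by simp
      have "L \<le> F (Suc (2*q) * M) / real (Suc (2*q) * M)" using low[OF pos] .
      moreover have xp: "0 < real (Suc (2*q) * M)" using pos by linarith
      ultimately have "L * real (Suc (2*q) * M) \<le> F (Suc (2*q) * M)"
        using pos_le_divide_eq[OF xp] by blast
      then show ?thesis using Fb by (simp add: algebra_simps)
    qed
    have LM: "L * real M \<le> A / 2"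
    proof (rule ccontr)
      assume "\<not> L * real M \<le> A / 2"
      then have s: "L * real M - A / 2 > 0" by simp
      obtain q :: nat where q: "real q > B / (L * real M - A / 2)" using reals_Archimedean2 by blast
      define t where "t = L * real M - A / 2"
      have t: "t > 0" using s t_def by simp
      have "B / t * t < real q * t" using q t t_def by (intro mult_strict_right_mono) auto
      then have qt: "real q * t > B" using t by simp
      have b: "L * real M * (2 * real q + 1) \<le> real q * A + B" by (rule bound)
      have e: "L * real M * (2 * real q + 1) = real q * A + A / 2 + (2 * real q + 1) * t"
        unfolding t_def by (simp add: algebra_simps)
      have "(real q) * t \<le> (2 * real q + 1) * t" using t by (intro mult_right_mono) auto
      then show False using qt b e A0 by linarith
    qed
    show ?thesis unfolding goal_eq sclL using LM absN Ae N_def m_def by simp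
  qed
qed

end
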